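(* Let $K/\mathbb{Q}_p$ be a finite extension with ring of integers $A$, uniformizer $\pi$ and ramification index $e$, and suppose $\log_p\frac{e}{p-1}$ is not an integer. Let $n$ be a positive integer and let $I_n$ be the ideal of $A$ generated by all $a^n-1$ with $a\in A$, $a\equiv1\bmod\pi$. Then $A/I_n\cong A/\pi^i$, where $i=e\big(\nu_p(n)-\lceil\log_p\frac{e}{p-1}\rceil\big)+p^{\lceil\log_p\frac{e}{p-1}\rceil}$ if $\lceil\log_p\frac{e}{p-1}\rceil\le\nu_p(n)$, and $i=p^{\nu_p(n)}$ if $\lceil\log_p\frac{e}{p-1}\rceil>\nu_p(n)$.
   Context: $\nu_p$ denotes the $p$-adic valuation. *)

theory Defs
  imports Complex_Main "HOL-Algebra.QuotRing" "HOL-Computational_Algebra.Primes"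
begin

definition type_ring :: "('a::comm_ring_1) ring" where
  "type_ring = \<lparr>carrier = UNIV, monoid.mult = (*), one = 1, zero = 0, add = (+)\<rparr>"

definition dvr_uniformizer :: "'a::idom \<Rightarrow> bool" where
  "dvr_uniformizer \<pi> \<longleftrightarrow> \<pi> \<noteq> 0 \<and> \<not> \<pi> dvd 1 \<and>
     (\<forall>x. x \<noteq> 0 \<longrightarrow> (\<exists>u k. u dvd 1 \<and> x = u * \<pi> ^ k))"

text \<open>pi-adic completeness: every pi-adically Cauchy sequence (in the normalized form
  x (n+1) = x n mod pi^n) has a limit.\<close>
definition pi_adically_complete :: "'a::comm_ring_1 \<Rightarrow> bool" where
  "pi_adically_complete \<pi> \<longleftrightarrow>
     (\<forall>x :: nat \<Rightarrow> 'a. (\<forall>n. \<pi> ^ n dvd (x (Suc n) - x n)) \<longrightarrow>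
        (\<exists>y. \<forall>n. \<pi> ^ n dvd (y - x n)))"

definition finite_residue_field :: "'a::comm_ring_1 \<Rightarrow> bool" where
  "finite_residue_field \<pi> \<longleftrightarrow> finite (range (\<lambda>a. {b. \<pi> dvd (b - a)}))"

definition I_ideal :: "'a::comm_ring_1 \<Rightarrow> nat \<Rightarrow> 'a set" where
  "I_ideal \<pi> n = genideal type_ring {a ^ n - 1 | a. \<pi> dvd (a - 1)}"

end

theory Submission
  imports Defs
begin


lemma type_ring_cring: "cring (type_ring :: ('a::comm_ring_1) ring)"
proof (rule cringI)
  show "abelian_group (type_ring :: 'a ring)"
    by (rule abelian_groupI) (auto simp: type_ring_def algebra_simps intro: exI[of _ "- _"])
  show "comm_monoid (type_ring :: 'a ring)"
    by (rule comm_monoidI) (auto simp: type_ring_def algebra_simps)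
qed (auto simp: type_ring_def algebra_simps)

lemma type_ring_ring: "ring (type_ring :: ('a::comm_ring_1) ring)"
  using type_ring_cring cring.axioms(1) by blast

lemma binom_p:
  fixes y :: "'a::comm_ring_1" and p :: nat
  assumes "prime p"
  shows "\<exists>z. (1+y)^p - 1 = of_nat p * y + y^p + of_nat p * y^2 * z"
proof -
  have p2: "p \<ge> 2" using assms prime_ge_2_nat by blast
  then obtain q where q: "p = Suc (Suc q)" by (metis add_2_eq_Suc le_iff_add)
  define f where "f k = of_nat (p choose k) * y^k" for k
  have "(1+y)^p = (y+1)^p" by (simp add: add.commute)
  also have "\<dots> = (\<Sum>k\<le>p. f k)" unfolding binomial_ring f_def by simp
  also have "\<dots> = (\<Sum>k<Suc (Suc q). f k) + f p" using q by (simp add: sum.atMost_Suc lessThan_Suc_atMost[symmetric])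
  also have "(\<Sum>k<Suc (Suc q). f k) = f 0 + f 1 + (\<Sum>k<q. f (Suc (Suc k)))"
    by (subst sum.lessThan_Suc_shift, subst sum.lessThan_Suc_shift, simp add: add.assoc)
  finally have eq: "(1+y)^p = f 0 + f 1 + (\<Sum>k<q. f (Suc (Suc k))) + f p" .
  have "(\<Sum>k<q. f (Suc (Suc k))) = of_nat p * y^2 * (\<Sum>k<q. of_nat ((p choose (Suc (Suc k))) div p) * y^k)"
    unfolding sum_distrib_left
  proof (rule sum.cong[OF refl])
    fix k assume "k \<in> {..<q}"
    hence "p dvd (p choose Suc (Suc k))" using q assms by (intro dvd_choose_prime) auto
    hence "p choose Suc (Suc k) = p * ((p choose Suc (Suc k)) div p)" by simp
    hence "(of_nat (p choose Suc (Suc k)) :: 'a) = of_nat p * of_nat ((p choose Suc (Suc k)) div p)"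
      by (metis of_nat_mult)
    thus "f (Suc (Suc k)) = of_nat p * y^2 * (of_nat ((p choose Suc (Suc k)) div p) * y^k)"
      unfolding f_def by (simp add: algebra_simps power2_eq_square)
  qed
  moreover have "f 0 = 1" "f 1 = of_nat p * y" "f p = y^p" by (auto simp: f_def)
  ultimately show ?thesis using eq by (intro exI[of _ "(\<Sum>k<q. of_nat ((p choose (Suc (Suc k))) div p) * y^k)"]) (simp add: algebra_simps)
qed

lemma unit_of_ndvd:
  fixes \<pi> x :: "'a::idom"
  assumes "dvr_uniformizer \<pi>" "\<not> \<pi> dvd x" shows "x dvd 1"
proof -
  have "x \<noteq> 0" using assms(2) by auto
  then obtain u k where u: "u dvd 1" "x = u * \<pi> ^ k" using assms(1) unfolding dvr_uniformizer_def by blast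
  show ?thesis
  proof (cases k)
    case 0 thus ?thesis using u by simp
  next
    case (Suc m) hence "\<pi> dvd x" using u by simp
    thus ?thesis using assms(2) by blast
  qed
qed

lemma unit_plus:
  fixes \<pi> U z :: "'a::idom"
  assumes "dvr_uniformizer \<pi>" "U dvd 1" shows "(U + \<pi> * z) dvd 1"
proof (rule unit_of_ndvd[OF assms(1)])
  show "\<not> \<pi> dvd U + \<pi> * z"
  proof
    assume h: "\<pi> dvd U + \<pi> * z"
    have "\<pi> dvd (U + \<pi> * z) - \<pi> * z" using h by (rule dvd_diff) simp
    hence "\<pi> dvd U" by simp
    hence "\<pi> dvd 1" using assms(2) dvd_trans by blast
    thus False using assms(1) unfolding dvr_uniformizer_def by blast
  qed
qed

lemma combine:
  fixes \<pi> U V :: "'a::idom"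
  assumes "dvr_uniformizer \<pi>" "U dvd 1" "a < b"
  shows "\<exists>W. W dvd 1 \<and> U * \<pi>^a + V * \<pi>^b = W * \<pi>^a"
proof -
  obtain d where d: "b = a + Suc d" using assms(3) less_iff_Suc_add by auto
  have "U * \<pi>^a + V * \<pi>^b = (U + \<pi> * (V * \<pi>^d)) * \<pi>^a" by (simp add: d power_add algebra_simps)
  thus ?thesis using unit_plus[OF assms(1,2)] by blast
qed

fun fseq :: "nat \<Rightarrow> nat \<Rightarrow> nat \<Rightarrow> nat" where
  "fseq p e 0 = 1"
| "fseq p e (Suc k) = min (p * fseq p e k) (e + fseq p e k)"

lemma fseq_dvd:
  fixes \<pi> u x :: "'a::idom"
  assumes "prime p" "(of_nat p :: 'a) = u * \<pi> ^ e" "\<pi> dvd x"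
  shows "\<pi> ^ fseq p e k dvd (1+x)^(p^k) - 1"
proof (induction k)
  case 0 thus ?case using assms(3) by simp
next
  case (Suc k)
  define y where "y = (1+x)^(p^k) - 1"
  define t where "t = fseq p e k"
  have yt: "\<pi>^t dvd y" using Suc unfolding y_def t_def .
  have eq: "(1+x)^(p^Suc k) = (1+y)^p" unfolding y_def by (simp only: power_Suc2 power_mult diff_add_cancel add.commute[of 1])
  obtain z where z: "(1+y)^p - 1 = of_nat p * y + y^p + of_nat p * y^2 * z" using binom_p[OF assms(1)] by blast
  define m where "m = min (p * t) (e + t)"
  have m: "fseq p e (Suc k) = m" unfolding m_def t_def by simp
  have d1: "\<pi>^(e+t) dvd of_nat p * y" unfolding assms(2) power_add using yt by (simp add: mult_dvd_mono)
  have "\<pi>^(e+t) dvd of_nat p * y * (y * z)" using d1 by simp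
  hence d2: "\<pi>^(e+t) dvd of_nat p * y^2 * z" by (simp add: power2_eq_square algebra_simps)
  have d3: "\<pi>^(p*t) dvd y^p" proof -
    have "\<pi>^(p*t) = (\<pi>^t)^p" by (simp add: power_mult[symmetric] mult.commute)
    thus ?thesis using yt by (simp add: dvd_power_same)
  qed
  have "\<pi>^m dvd \<pi>^(e+t)" "\<pi>^m dvd \<pi>^(p*t)" unfolding m_def by (auto intro: le_imp_power_dvd)
  hence "\<pi>^m dvd of_nat p * y + y^p + of_nat p * y^2 * z" using d1 d2 d3 by (meson dvd_add dvd_trans)
  thus ?case using eq z m by simp
qed

lemma fseq_exact:
  fixes \<pi> u :: "'a::idom"
  assumes "dvr_uniformizer \<pi>" "prime p" "(of_nat p :: 'a) = u * \<pi> ^ e" "u dvd 1"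
    "\<And>k. p * fseq p e k \<noteq> e + fseq p e k"
  shows "\<exists>w. w dvd 1 \<and> (1+\<pi>)^(p^k) - 1 = w * \<pi> ^ fseq p e k"
proof (induction k)
  case 0 thus ?case by (intro exI[of _ 1]) simp
next
  case (Suc k)
  define y where "y = (1+\<pi>)^(p^k) - 1"
  define t where "t = fseq p e k"
  obtain w where w: "w dvd 1" "y = w * \<pi>^t" using Suc unfolding y_def t_def by blast
  have t1: "t \<ge> 1" unfolding t_def
  proof (induction k)
    case (Suc k)
    have "p \<ge> 1" using assms(2) prime_ge_1_nat by blast
    hence "p * fseq p e k \<ge> fseq p e k" by simp
    thus ?case using Suc by simp
  qed simp
  then obtain s where s: "t = Suc s" using not0_implies_Suc by fastforce
  have eq: "(1+\<pi>)^(p^Suc k) = (1+y)^p" unfolding y_def by (simp only: power_Suc2 power_mult diff_add_cancel add.commute[of 1])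
  obtain z where z: "(1+y)^p - 1 = of_nat p * y + y^p + of_nat p * y^2 * z" using binom_p[OF assms(2)] by blast
  define U where "U = u * w * (1 + \<pi> * (w * \<pi>^s * z))"
  have U1: "(1 + \<pi> * (w * \<pi>^s * z)) dvd 1" by (rule unit_plus[OF assms(1)]) simp
  have U: "U dvd 1" unfolding U_def using U1 assms(4) w(1) by (metis mult_dvd_mono mult_1_left)
  have A: "of_nat p * y + of_nat p * y^2 * z = U * \<pi>^(e+t)"
    unfolding U_def assms(3) w(2) s by (simp add: power_add power2_eq_square algebra_simps)
  have B: "y^p = w^p * \<pi>^(p*t)" unfolding w(2) by (simp add: power_mult_distrib power_mult[symmetric] mult.commute)
  have wp: "w^p dvd 1" using w(1) by (metis dvd_power_same power_one)
  have ne: "p * t \<noteq> e + t" using assms(5) unfolding t_def .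
  have m: "fseq p e (Suc k) = min (p * t) (e + t)" unfolding t_def by simp
  have sum: "(1+y)^p - 1 = U * \<pi>^(e+t) + w^p * \<pi>^(p*t)" using z A B by (simp add: algebra_simps)
  show ?case
  proof (cases "p * t < e + t")
    case True
    obtain W where "W dvd 1" "w^p * \<pi>^(p*t) + U * \<pi>^(e+t) = W * \<pi>^(p*t)" using combine[OF assms(1) wp True] by blast
    thus ?thesis using eq sum m True by (intro exI[of _ W]) (simp add: add.commute)
  next
    case False
    hence lt: "e + t < p * t" using ne by simp
    obtain W where "W dvd 1" "U * \<pi>^(e+t) + w^p * \<pi>^(p*t) = W * \<pi>^(e+t)" using combine[OF assms(1) U lt] by blast
    thus ?thesis using eq sum m lt by (intro exI[of _ W]) simp
  qed
qed

lemma fseq_val: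
  assumes p: "p \<ge> 2" and lo: "\<And>k. k < c \<Longrightarrow> p^k*(p-1) < e" and hi: "e < p^c*(p-1)"
  shows "fseq p e k = (if k \<le> c then p^k else p^c + e*(k-c)) \<and> p * fseq p e k \<noteq> e + fseq p e k"
proof (induction k)
  have pm: "\<And>x. p * x = x + (p-1)*x" using p by (metis Suc_diff_1 less_le_trans mult_Suc pos2 add.commute)
  {
    case 0
    show ?case
    proof (cases "c = 0")
      case True thus ?thesis using hi pm[of 1] by simp
    next
      case False thus ?thesis using lo[of 0] pm[of 1] by simp
    qed
  next
    case (Suc k)
    show ?case
    proof (cases "Suc k \<le> c")
      case True
      hence fk: "fseq p e k = p^k" using Suc by simp
      have l: "p^k*(p-1) < e" using lo True by simp
      hence "p * p^k < e + p^k" using pm[of "p^k"] by (simp add: mult.commute)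
      hence f1: "fseq p e (Suc k) = p^Suc k" using fk by simp
      have "p * p^Suc k \<noteq> e + p^Suc k"
      proof (cases "Suc k < c")
        case True thus ?thesis using lo[of "Suc k"] pm[of "p^Suc k"] by (simp add: mult.commute)
      next
        case False hence "Suc k = c" using \<open>Suc k \<le> c\<close> by simp
        thus ?thesis using hi pm[of "p^Suc k"] by (simp add: mult.commute)
      qed
      thus ?thesis using f1 True by simp
    next
      case False
      hence kc: "c \<le> k" by simp
      hence fk: "fseq p e k = p^c + e*(k-c)" using Suc by simp
      have "p^c*(p-1) \<le> (p^c + e*(k-c))*(p-1)" by simp
      hence g: "e < (p^c + e*(k-c))*(p-1)" using hi by linarith
      hence "e + fseq p e k < p * fseq p e k" using fk pm[of "fseq p e k"] by (simp add: mult.commute)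
      hence f1: "fseq p e (Suc k) = p^c + e*(Suc k - c)" using fk kc by (simp add: Suc_diff_le)
      have "p^c*(p-1) \<le> (p^c + e*(Suc k-c))*(p-1)" by simp
      hence "e < (p^c + e*(Suc k-c))*(p-1)" using hi by linarith
      hence "p * fseq p e (Suc k) \<noteq> e + fseq p e (Suc k)" using f1 pm[of "fseq p e (Suc k)"] by (simp add: mult.commute)
      thus ?thesis using f1 False by simp
    qed
  }
qed



lemma real_bounds:
  fixes p e :: nat
  assumes "prime p" "e > 0" "log (real p) (real e / (real p - 1)) \<notin> \<int>"
  defines "L \<equiv> log (real p) (real e / (real p - 1))"
  shows "0 \<le> ceiling L" "\<And>k. k < nat (ceiling L) \<Longrightarrow> p^k*(p-1) < e" "e < p^(nat (ceiling L))*(p-1)"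
proof -
  have p2: "p \<ge> 2" using assms(1) prime_ge_2_nat by blast
  hence p1: "real p > 1" by simp
  have rq: "real (p - 1) = real p - 1" using p2 by (simp add: of_nat_diff)
  have pos: "real e / (real p - 1) > 0" using p2 assms(2) by simp
  have cc: "of_int (ceiling L) - 1 < L" "L \<le> of_int (ceiling L)" using ceiling_correct by auto
  have "L \<noteq> of_int (ceiling L)" using assms(3) unfolding L_def by (metis Ints_of_int)
  hence Lc: "L < of_int (ceiling L)" using cc(2) by (simp add: less_le)
  have "real p powr (-1) = 1 / real p" using p1 by (simp add: powr_minus divide_inverse)
  also have "\<dots> < real e / (real p - 1)"
  proof -
    have e1: "real e \<ge> 1" using assms(2) by simp
    have "(real p - 1) / real p < 1" using p1 by simp
    hence "(1 / real p) * (real p - 1) < real e" using e1 by simp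
    thus ?thesis using p1 by (subst pos_less_divide_eq) auto
  qed
  finally have "-1 < L" unfolding L_def using less_log_iff[OF p1 pos] by simp
  thus c0: "0 \<le> ceiling L" using cc by linarith
  {
    fix k assume k: "k < nat (ceiling L)"
    hence "real k < L" using cc c0 by linarith
    hence "real p powr real k < real e / (real p - 1)" unfolding L_def using less_log_iff[OF p1 pos] by simp
    hence "real p ^ k < real e / (real p - 1)" using p1 by (simp add: powr_realpow)
    hence "real p ^ k * (real p - 1) < real e" using p2 by (simp add: pos_less_divide_eq)
    hence "real (p^k*(p-1)) < real e" using rq by simp
    thus "p^k*(p-1) < e" by linarith
  }
  have "L < real (nat (ceiling L))" using Lc c0 by simp
  hence "real e / (real p - 1) < real p powr real (nat (ceiling L))" unfolding L_def using log_less_iff[OF p1 pos] by simp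
  hence "real e / (real p - 1) < real p ^ nat (ceiling L)" using p1 by (simp add: powr_realpow)
  hence "real e < real p ^ nat (ceiling L) * (real p - 1)" using p2 by (simp add: pos_divide_less_eq)
  hence "real e < real (p ^ nat (ceiling L) * (p - 1))" using rq by simp
  thus "e < p^(nat (ceiling L))*(p-1)" by linarith
qed

lemma ndvd_m:
  fixes \<pi> u :: "'a::idom"
  assumes "dvr_uniformizer \<pi>" "prime p" "(of_nat p :: 'a) = u * \<pi> ^ e" "e > 0" "\<not> p dvd m"
  shows "\<not> \<pi> dvd of_nat m"
proof
  assume h: "\<pi> dvd of_nat m"
  have "coprime p m" using assms(2,5) prime_imp_coprime by blast
  hence "gcd (int p) (int m) = 1" by simp
  then obtain a b where ab: "a * int p + b * int m = 1" using bezout_int by metis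
  hence "(of_int (a * int p + b * int m) :: 'a) = 1" by simp
  hence eq: "of_int a * of_nat p + of_int b * of_nat m = (1::'a)" by simp
  have "\<pi> dvd of_nat p" using assms(3,4) by (simp add: dvd_power)
  hence "\<pi> dvd of_int a * of_nat p + of_int b * of_nat m" using h by simp
  hence "\<pi> dvd 1" using eq by simp
  thus False using assms(1) unfolding dvr_uniformizer_def by blast
qed

lemma sum_unit:
  fixes \<pi> b :: "'a::idom"
  assumes "dvr_uniformizer \<pi>" "\<pi> dvd b - 1" "\<not> \<pi> dvd of_nat m"
  shows "(\<Sum>j<m. b^j) dvd 1"
proof (rule unit_of_ndvd[OF assms(1)])
  have "\<pi> dvd (\<Sum>j<m. b^j - 1)"
  proof (rule dvd_sum)
    fix j show "\<pi> dvd b^j - 1" using assms(2) power_diff_1_eq[of b j] by (metis dvd_mult2)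
  qed
  hence d: "\<pi> dvd (\<Sum>j<m. b^j) - of_nat m" by (simp add: sum_subtractf)
  show "\<not> \<pi> dvd (\<Sum>j<m. b^j)"
  proof
    assume "\<pi> dvd (\<Sum>j<m. b^j)"
    hence "\<pi> dvd (\<Sum>j<m. b^j) - ((\<Sum>j<m. b^j) - of_nat m)" using d by (rule dvd_diff)
    thus False using assms(3) by simp
  qed
qed

theorem mainTheorem15:
  fixes \<pi> u :: "'a::{idom, ring_char_0}" and p e n :: nat
  assumes "prime p"
    and "dvr_uniformizer \<pi>"
    and "pi_adically_complete \<pi>"
    and "finite_residue_field \<pi>"
    and "u dvd 1" and "(of_nat p :: 'a) = u * \<pi> ^ e" and "e > 0"
    and "log (real p) (real e / (real p - 1)) \<notin> \<int>"
    and "n > 0"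
  shows "let c = ceiling (log (real p) (real e / (real p - 1)));
             v = multiplicity p n;
             i = (if c \<le> int v then nat (int e * (int v - c)) + p ^ nat c else p ^ v)
         in type_ring Quot (I_ideal \<pi> n) \<simeq> type_ring Quot (genideal type_ring {\<pi> ^ i})"
proof -
  define c where "c = ceiling (log (real p) (real e / (real p - 1)))"
  define v where "v = multiplicity p n"
  define i where "i = (if c \<le> int v then nat (int e * (int v - c)) + p ^ nat c else p ^ v)"
  note rb = real_bounds[OF assms(1,7,8), folded c_def]
  have p2: "p \<ge> 2" using assms(1) prime_ge_2_nat by blast
  note fv = fseq_val[OF p2 rb(2) rb(3)]
  have fi: "fseq p e v = i"
  proof (cases "c \<le> int v")
    case True
    have cn: "c = int (nat c)" using rb(1) by simp
    have "nat c \<le> v" using True rb(1) by linarith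
    hence "int e * (int v - c) = int (e * (v - nat c))" using cn by (simp add: of_nat_diff)
    hence "nat (int e * (int v - c)) = e * (v - nat c)" by (metis nat_int)
    moreover have "v \<le> nat c \<Longrightarrow> v = nat c" using True rb(1) by linarith
    ultimately show ?thesis using fv[of v] True unfolding i_def by auto
  next
    case False thus ?thesis using fv[of v] unfolding i_def by auto
  qed
  have ne: "\<And>k. p * fseq p e k \<noteq> e + fseq p e k" using fv by blast
  obtain m where nm: "n = p ^ v * m" "\<not> p dvd m" using multiplicity_decompose'[of n p] assms(9) assms(1) unfolding v_def
    by (metis not_prime_unit neq0_conv)
  have mu: "\<not> \<pi> dvd of_nat m" using ndvd_m[OF assms(2,1,6,7) nm(2)] .
  obtain w where w: "w dvd 1" "(1+\<pi>)^(p^v) - 1 = w * \<pi>^i"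
    using fseq_exact[OF assms(2,1,6,5) ne, of v] fi by auto
  define b where "b = (1+\<pi>)^(p^v)"
  have b1: "\<pi> dvd b - 1" unfolding b_def using power_diff_1_eq[of "1+\<pi>" "p^v"] by (simp add: dvd_mult2)
  have S: "(\<Sum>j<m. b^j) dvd 1" using sum_unit[OF assms(2) b1 mu] .
  have gen: "(1+\<pi>)^n - 1 = (w * (\<Sum>j<m. b^j)) * \<pi>^i"
  proof -
    have "(1+\<pi>)^n - 1 = b^m - 1" unfolding b_def nm(1) by (simp add: power_mult)
    also have "\<dots> = (b - 1) * (\<Sum>j<m. b^j)" by (rule power_diff_1_eq)
    finally show ?thesis using w(2) unfolding b_def by (simp add: algebra_simps)
  qed
  have "(w * (\<Sum>j<m. b^j)) dvd 1" using w(1) S by (metis mult_dvd_mono mult_1_left)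
  then obtain k where k: "1 = (w * (\<Sum>j<m. b^j)) * k" by (metis dvdE)
  have pik: "\<pi>^i = k * ((1+\<pi>)^n - 1)" unfolding gen by (metis k mult.commute mult.left_commute mult_1_right)
  have up: "\<pi>^i dvd a^n - 1" if "\<pi> dvd a - 1" for a
  proof -
    have "\<pi>^i dvd (1 + (a-1))^(p^v) - 1" using fseq_dvd[OF assms(1,6) that, of v] fi by simp
    hence d: "\<pi>^i dvd a^(p^v) - 1" by simp
    have "a^n - 1 = (a^(p^v))^m - 1" unfolding nm(1) by (simp add: power_mult)
    also have "\<dots> = (a^(p^v) - 1) * (\<Sum>j<m. (a^(p^v))^j)" by (rule power_diff_1_eq)
    finally show ?thesis using d by simp
  qed
  interpret R: ring "type_ring :: 'a ring" by (rule type_ring_ring)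
  have carr: "carrier (type_ring :: 'a ring) = UNIV" by (simp add: type_ring_def)
  have mul: "\<And>x y. x \<otimes>\<^bsub>(type_ring :: 'a ring)\<^esub> y = x * y" by (simp add: type_ring_def)
  define S where "S = {a ^ n - 1 | a :: 'a. \<pi> dvd (a - 1)}"
  define G where "G = genideal (type_ring :: 'a ring) {\<pi>^i}"
  have IS: "I_ideal \<pi> n = genideal type_ring S" unfolding I_ideal_def S_def ..
  have idG: "ideal G type_ring" unfolding G_def by (rule R.genideal_ideal) (simp add: carr)
  have idI: "ideal (genideal type_ring S) (type_ring :: 'a ring)" by (rule R.genideal_ideal) (simp add: carr)
  have piG: "\<pi>^i \<in> G" unfolding G_def by (rule R.genideal_self') (simp add: carr)
  have "genideal type_ring S \<subseteq> G"
  proof (rule R.genideal_minimal[OF idG])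
    show "S \<subseteq> G"
    proof
      fix s assume "s \<in> S"
      then obtain a where a: "s = a^n - 1" "\<pi> dvd a - 1" unfolding S_def by blast
      then obtain q where q: "a^n - 1 = \<pi>^i * q" using up by (meson dvdE)
      have "q \<otimes>\<^bsub>(type_ring :: 'a ring)\<^esub> \<pi>^i \<in> G" using ideal.I_l_closed[OF idG piG] carr by simp
      thus "s \<in> G" using a q mul by (simp add: mult.commute)
    qed
  qed
  moreover have "G \<subseteq> genideal type_ring S"
    unfolding G_def
  proof (rule R.genideal_minimal[OF idI])
    have "(1+\<pi>)^n - 1 \<in> S" unfolding S_def by auto
    hence "(1+\<pi>)^n - 1 \<in> genideal type_ring S" using R.genideal_self[of S] carr by auto
    hence "k \<otimes>\<^bsub>(type_ring :: 'a ring)\<^esub> ((1+\<pi>)^n - 1) \<in> genideal type_ring S"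
      using ideal.I_l_closed[OF idI] carr by simp
    thus "{\<pi>^i} \<subseteq> genideal type_ring S" using pik mul by simp
  qed
  ultimately have "I_ideal \<pi> n = G" using IS by simp
  hence "type_ring Quot (I_ideal \<pi> n) \<simeq> type_ring Quot (genideal type_ring {\<pi> ^ i})"
    unfolding G_def by (simp add: ring_iso_refl)
  thus ?thesis unfolding Let_def c_def[symmetric] v_def[symmetric] i_def[symmetric] .
qed

end
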